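(* Let $G_{P,\mathcal{K}}$ be the closure under R1–R4 of a pattern $P$ with consistent background knowledge $\mathcal{K}$, and let $x\to y$ in $G_{P,\mathcal{K}}$. Then there exists a consistent DAG extension of $G_{P,\mathcal{K}}$ in which every edge that is undirected in $G_{P,\mathcal{K}}$ and incident to $x$ or $y$ is oriented out of $x$ or out of $y$, respectively.
   Context: A PDAG is a graph with directed and undirected edges and no directed cycle. The pattern of a DAG is the graph with the same skeleton in which an edge is directed iff it belongs to a v-structure (a triple $a\to c\leftarrow b$ with $a,b$ non-adjacent). A consistent DAG extension of a PDAG $G$ is a DAG with the same skeleton, the same orientation of every directed edge of $G$, and no v-structures other than those of $G$. A set $\mathcal{K}$ of orientations of undirected edges of $P$ is consistent background knowledge if some DAG with pattern $P$ contains all of them. $G_{P,\mathcal{K}}$ is obtained from $P$ by orienting the edges in $\mathcal{K}$ and then repeatedly applying until none applies: R1: if $k\to i$, $i - j$, $k,j$ non-adjacent, orient $i\to j$; R2: if $i\to k\to j$ and $i - j$, orient $i\to j$; R3: if $i - k$, $i - l$, $i - j$, $k\to j$, $l\to j$, $k,l$ non-adjacent, orient $i\to j$; R4: if $i - k$, $i - l$, $i - j$, $k\to l\to j$, $k,j$ non-adjacent, orient $i\to j$. *)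

theory Defs
  imports Main
begin

text \<open>A (partially directed) graph on a vertex set V is a relation E \<subseteq> V \<times> V:
  an undirected edge a - b is encoded by both pairs (a,b),(b,a) \<in> E,
  a directed edge a \<rightarrow> b by (a,b) \<in> E and (b,a) \<notin> E.\<close>

definition adj :: "('a \<times> 'a) set \<Rightarrow> 'a \<Rightarrow> 'a \<Rightarrow> bool" where
  "adj E a b \<longleftrightarrow> (a,b) \<in> E \<or> (b,a) \<in> E"

definition dir :: "('a \<times> 'a) set \<Rightarrow> 'a \<Rightarrow> 'a \<Rightarrow> bool" where
  "dir E a b \<longleftrightarrow> (a,b) \<in> E \<and> (b,a) \<notin> E"

definition und :: "('a \<times> 'a) set \<Rightarrow> 'a \<Rightarrow> 'a \<Rightarrow> bool" where
  "und E a b \<longleftrightarrow> (a,b) \<in> E \<and> (b,a) \<in> E"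

definition directed_part :: "('a \<times> 'a) set \<Rightarrow> ('a \<times> 'a) set" where
  "directed_part E = {(a,b). dir E a b}"

definition is_pdag :: "'a set \<Rightarrow> ('a \<times> 'a) set \<Rightarrow> bool" where
  "is_pdag V E \<longleftrightarrow> finite V \<and> E \<subseteq> V \<times> V \<and> (\<forall>a. (a,a) \<notin> E) \<and> acyclic (directed_part E)"

definition is_dag :: "'a set \<Rightarrow> ('a \<times> 'a) set \<Rightarrow> bool" where
  "is_dag V E \<longleftrightarrow> finite V \<and> E \<subseteq> V \<times> V \<and> acyclic E"

definition vstruct :: "('a \<times> 'a) set \<Rightarrow> 'a \<Rightarrow> 'a \<Rightarrow> 'a \<Rightarrow> bool" where
  "vstruct E a c b \<longleftrightarrow> dir E a c \<and> dir E b c \<and> a \<noteq> b \<and> \<not> adj E a b"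

definition in_vstruct :: "('a \<times> 'a) set \<Rightarrow> 'a \<Rightarrow> 'a \<Rightarrow> bool" where
  "in_vstruct E u w \<longleftrightarrow> (\<exists>c. vstruct E u w c \<or> vstruct E c w u)"

text \<open>Pattern of a DAG D: same skeleton, an edge is directed iff it lies in a v-structure.\<close>
definition pattern :: "('a \<times> 'a) set \<Rightarrow> ('a \<times> 'a) set" where
  "pattern D = {(a,b). (a,b) \<in> D \<or> ((b,a) \<in> D \<and> \<not> in_vstruct D b a)}"

definition consistent_extension :: "'a set \<Rightarrow> ('a \<times> 'a) set \<Rightarrow> ('a \<times> 'a) set \<Rightarrow> bool" where
  "consistent_extension V G D \<longleftrightarrow>
     is_dag V D \<and>
     (\<forall>a b. adj D a b \<longleftrightarrow> adj G a b) \<and>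
     (\<forall>a b. dir G a b \<longrightarrow> (a,b) \<in> D) \<and>
     (\<forall>a c b. vstruct D a c b \<longrightarrow> vstruct G a c b)"

text \<open>K (a set of orientations (a,b) meaning a \<rightarrow> b of undirected edges of P) is
  consistent background knowledge for the pattern P.\<close>
definition consistent_bk :: "'a set \<Rightarrow> ('a \<times> 'a) set \<Rightarrow> ('a \<times> 'a) set \<Rightarrow> bool" where
  "consistent_bk V P K \<longleftrightarrow>
     (\<forall>(a,b) \<in> K. und P a b) \<and> (\<exists>D. is_dag V D \<and> pattern D = P \<and> K \<subseteq> D)"

definition orient :: "('a \<times> 'a) set \<Rightarrow> 'a \<Rightarrow> 'a \<Rightarrow> ('a \<times> 'a) set" where
  "orient E a b = E - {(b,a)}"

definition orient_all :: "('a \<times> 'a) set \<Rightarrow> ('a \<times> 'a) set \<Rightarrow> ('a \<times> 'a) set" where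
  "orient_all E K = E - {(b,a). (a,b) \<in> K}"

definition meek_applies :: "('a \<times> 'a) set \<Rightarrow> 'a \<Rightarrow> 'a \<Rightarrow> bool" where
  "meek_applies E i j \<longleftrightarrow> und E i j \<and>
     ((\<exists>k. dir E k i \<and> k \<noteq> j \<and> \<not> adj E k j) \<or>
      (\<exists>k. dir E i k \<and> dir E k j) \<or>
      (\<exists>k l. und E i k \<and> und E i l \<and> dir E k j \<and> dir E l j \<and> k \<noteq> l \<and> \<not> adj E k l) \<or>
      (\<exists>k l. und E i k \<and> und E i l \<and> dir E k l \<and> dir E l j \<and> k \<noteq> j \<and> \<not> adj E k j))"

inductive meek_reach :: "('a \<times> 'a) set \<Rightarrow> ('a \<times> 'a) set \<Rightarrow> bool" where
  refl: "meek_reach E E"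
| step: "meek_reach E F \<Longrightarrow> meek_applies F i j \<Longrightarrow> meek_reach E (orient F i j)"

definition meek_closure :: "('a \<times> 'a) set \<Rightarrow> ('a \<times> 'a) set \<Rightarrow> ('a \<times> 'a) set \<Rightarrow> bool" where
  "meek_closure P K G \<longleftrightarrow> meek_reach (orient_all P K) G \<and> (\<forall>i j. \<not> meek_applies G i j)"

end

theory Submission
  imports Defs
begin


definition restr :: "('a \<times> 'a) set \<Rightarrow> 'a set \<Rightarrow> ('a \<times> 'a) set" where
  "restr E R = E \<inter> (R \<times> R)"

definition closed :: "('a \<times> 'a) set \<Rightarrow> bool" where
  "closed E \<longleftrightarrow> (\<forall>i j. \<not> meek_applies E i j)"

definition good :: "'a set \<Rightarrow> ('a \<times> 'a) set \<Rightarrow> bool" where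
  "good W H \<longleftrightarrow> finite W \<and> H \<subseteq> W \<times> W \<and> closed H \<and> (\<exists>D. consistent_extension W H D)"

definition vsink :: "'a set \<Rightarrow> ('a \<times> 'a) set \<Rightarrow> 'a \<Rightarrow> bool" where
  "vsink W H v \<longleftrightarrow> v \<in> W \<and> (\<forall>w. \<not> dir H v w) \<and>
     (\<forall>u w. und H v u \<longrightarrow> adj H v w \<longrightarrow> w \<noteq> u \<longrightarrow> adj H u w)"

lemma adj_sym: "adj H a b = adj H b a" by (auto simp: adj_def)
lemma und_sym: "und H a b = und H b a" by (auto simp: und_def)
lemma und_symI: "und H a b \<Longrightarrow> und H b a" by (auto simp: und_def)
lemma adj_symI: "adj H a b \<Longrightarrow> adj H b a" by (auto simp: adj_def)
lemma und_adj: "und H a b \<Longrightarrow> adj H a b" by (auto simp: und_def adj_def)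
lemma dir_adj: "dir H a b \<Longrightarrow> adj H a b" by (auto simp: dir_def adj_def)
lemma dir_adj': "dir H a b \<Longrightarrow> adj H b a" by (auto simp: dir_def adj_def)
lemma adj_cases: "adj H a b \<Longrightarrow> und H a b \<or> dir H a b \<or> dir H b a"
  by (auto simp: und_def adj_def dir_def)
lemma und_not_dir: "und H a b \<Longrightarrow> \<not> dir H a b" by (auto simp: und_def dir_def)
lemma und_not_dir': "und H a b \<Longrightarrow> \<not> dir H b a" by (auto simp: und_def dir_def)
lemma dir_not_dir: "dir H a b \<Longrightarrow> \<not> dir H b a" by (auto simp: dir_def)

lemma restr_adj[simp]: "adj (restr E R) a b \<longleftrightarrow> a \<in> R \<and> b \<in> R \<and> adj E a b"
  by (auto simp: restr_def adj_def)
lemma restr_dir[simp]: "dir (restr E R) a b \<longleftrightarrow> a \<in> R \<and> b \<in> R \<and> dir E a b"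
  by (auto simp: restr_def dir_def)
lemma restr_und[simp]: "und (restr E R) a b \<longleftrightarrow> a \<in> R \<and> b \<in> R \<and> und E a b"
  by (auto simp: restr_def und_def)

lemma closed_restr: "closed E \<Longrightarrow> closed (restr E R)"
  unfolding closed_def meek_applies_def by simp

lemma R1: "closed H \<Longrightarrow> und H i j \<Longrightarrow> dir H k i \<Longrightarrow> k \<noteq> j \<Longrightarrow> adj H k j"
  unfolding closed_def meek_applies_def by blast
lemma R2: "closed H \<Longrightarrow> und H i j \<Longrightarrow> dir H i k \<Longrightarrow> \<not> dir H k j"
  unfolding closed_def meek_applies_def by blast
lemma R3: "closed H \<Longrightarrow> und H i j \<Longrightarrow> und H i k \<Longrightarrow> und H i l \<Longrightarrow> dir H k j \<Longrightarrow> dir H l j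
   \<Longrightarrow> k \<noteq> l \<Longrightarrow> adj H k l"
  unfolding closed_def meek_applies_def by blast
lemma R4: "closed H \<Longrightarrow> und H i j \<Longrightarrow> und H i k \<Longrightarrow> und H i l \<Longrightarrow> dir H k l \<Longrightarrow> dir H l j
   \<Longrightarrow> k \<noteq> j \<Longrightarrow> adj H k j"
  unfolding closed_def meek_applies_def by blast

lemma ext_restr:
  assumes "consistent_extension W H D" "R \<subseteq> W"
  shows "consistent_extension R (restr H R) (restr D R)"
proof -
  have "is_dag R (restr D R)"
    using assms by (auto simp: consistent_extension_def is_dag_def restr_def
        intro: finite_subset acyclic_subset)
  moreover have "\<forall>a b. adj (restr D R) a b \<longleftrightarrow> adj (restr H R) a b"
    using assms by (simp add: consistent_extension_def)
  moreover have "\<forall>a b. dir (restr H R) a b \<longrightarrow> (a,b) \<in> restr D R"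
    using assms unfolding consistent_extension_def by (simp add: restr_def[of D])
  moreover have "\<forall>a c b. vstruct (restr D R) a c b \<longrightarrow> vstruct (restr H R) a c b"
    using assms by (auto simp: consistent_extension_def vstruct_def)
  ultimately show ?thesis by (simp add: consistent_extension_def)
qed

lemma good_restr: assumes "good W H" "R \<subseteq> W" shows "good R (restr H R)"
proof -
  from assms obtain D where "consistent_extension W H D" by (auto simp: good_def)
  then have "consistent_extension R (restr H R) (restr D R)" using assms(2) by (rule ext_restr)
  moreover have "finite R" using assms by (auto simp: good_def intro: finite_subset)
  moreover have "restr H R \<subseteq> R \<times> R" by (auto simp: restr_def)
  moreover have "closed (restr H R)" using assms by (auto simp: good_def closed_restr)
  ultimately show ?thesis by (auto simp: good_def)
qed

lemma vsink_restr: "vsink W H v \<Longrightarrow> v \<in> R \<Longrightarrow> vsink R (restr H R) v"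
  by (auto simp: vsink_def)

lemma vsink_lift:
  assumes "vsink R (restr H R) v" "\<forall>w. adj H v w \<longrightarrow> w \<in> R" "R \<subseteq> W"
  shows "vsink W H v"
  using assms unfolding vsink_def
  by (metis (no_types, lifting) dir_adj restr_adj restr_dir restr_und subsetD und_adj)

lemma ext_irr: "consistent_extension W H D \<Longrightarrow> \<not> adj H a a"
  unfolding consistent_extension_def is_dag_def acyclic_def adj_def
  by (metis r_into_trancl')

lemma good_irr: "good W H \<Longrightarrow> \<not> adj H a a"
  by (meson ext_irr good_def)

lemma sink_exists:
  assumes "finite S" "S \<noteq> {}" "acyclic Rl"
  shows "\<exists>v\<in>S. \<forall>w\<in>S. (v,w) \<notin> Rl"
proof -
  let ?Q = "Rl \<inter> (S \<times> S)"
  have "finite ?Q" using assms by auto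
  moreover have "acyclic ?Q" using assms(3) by (rule acyclic_subset) auto
  ultimately have "wf (?Q\<inverse>)" by (rule finite_acyclic_wf_converse)
  then obtain x where "x \<in> S" using assms by auto
  from wfE_min[OF \<open>wf (?Q\<inverse>)\<close> this] obtain v where "v \<in> S" "\<And>y. (y,v) \<in> ?Q\<inverse> \<Longrightarrow> y \<notin> S"
    by blast
  then show ?thesis by blast
qed

lemma ext_dir: "consistent_extension W H D \<Longrightarrow> dir H a b \<Longrightarrow> (a,b) \<in> D"
  by (simp add: consistent_extension_def)

lemma ext_acyc: "consistent_extension W H D \<Longrightarrow> acyclic D"
  by (simp add: consistent_extension_def is_dag_def)

lemma dir_sink_exists:
  assumes "good W H" "finite S" "S \<noteq> {}"
  shows "\<exists>v\<in>S. \<forall>w\<in>S. \<not> dir H v w"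
proof -
  obtain D where D: "consistent_extension W H D" using assms by (auto simp: good_def)
  from sink_exists[OF assms(2,3) ext_acyc[OF D]] obtain v where "v\<in>S" "\<forall>w\<in>S. (v,w) \<notin> D" by blast
  then show ?thesis using ext_dir[OF D] by blast
qed

lemma no_3cycle:
  assumes "good W H" "dir H a b" "dir H b c" "dir H c a" shows False
proof -
  obtain D where D: "consistent_extension W H D" using assms by (auto simp: good_def)
  have "(a,a) \<in> D\<^sup>+" using ext_dir[OF D] assms
    by (meson trancl.trancl_into_trancl r_into_trancl)
  then show False using ext_acyc[OF D] by (simp add: acyclic_def)
qed

lemma ext_vsink:
  assumes "good W H" "W \<noteq> {}"
  shows "\<exists>v. vsink W H v"
proof -
  obtain D where D: "consistent_extension W H D" using assms by (auto simp: good_def)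
  have fin: "finite W" and DW: "D \<subseteq> W \<times> W" and ac: "acyclic D"
    using assms D by (auto simp: good_def consistent_extension_def is_dag_def)
  from sink_exists[OF fin assms(2) ac] obtain v where v: "v \<in> W" "\<forall>w\<in>W. (v,w) \<notin> D" by blast
  have nv: "\<And>w. (v,w) \<notin> D" using v DW by blast
  have sk: "\<And>a b. adj D a b \<longleftrightarrow> adj H a b" using D by (simp add: consistent_extension_def)
  have vs: "\<And>a c b. vstruct D a c b \<Longrightarrow> vstruct H a c b" using D by (simp add: consistent_extension_def)
  have "\<forall>w. \<not> dir H v w" using ext_dir[OF D] nv by blast
  moreover have "\<forall>u w. und H v u \<longrightarrow> adj H v w \<longrightarrow> w \<noteq> u \<longrightarrow> adj H u w"
  proof (intro allI impI, rule ccontr)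
    fix u w assume a: "und H v u" "adj H v w" "w \<noteq> u" "\<not> adj H u w"
    have "(u,v) \<in> D" using sk[of v u] a(1) nv by (auto simp: adj_def und_def)
    moreover have "(w,v) \<in> D" using sk[of v w] a(2) nv by (auto simp: adj_def)
    ultimately have "vstruct D u v w" using a(3,4) nv sk[of u w] by (auto simp: vstruct_def dir_def)
    then have "vstruct H u v w" by (rule vs)
    then show False using a(1) by (auto simp: vstruct_def dir_def und_def)
  qed
  ultimately show ?thesis using v by (auto simp: vsink_def)
qed

lemma DT:
  assumes fin: "finite W" and HW: "H \<subseteq> W \<times> W" and irr: "\<And>a. \<not> adj H a a"
    and vs: "vsink W H v"
    and E: "consistent_extension (W - {v}) (restr H (W - {v})) D'"
  shows "consistent_extension W H (D' \<union> {(u,v) | u. adj H u v})"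
proof -
  let ?D = "D' \<union> {(u,v) | u. adj H u v}"
  have D'W: "D' \<subseteq> (W-{v}) \<times> (W-{v})" and acD': "acyclic D'"
    using E by (auto simp: consistent_extension_def is_dag_def)
  have inD: "a \<noteq> v" if ab: "(a,b) \<in> ?D" for a b
  proof (cases "(a,b) \<in> D'")
    case True then show ?thesis using D'W by auto
  next
    case False then have "b = v" "adj H a v" using ab by auto
    then show ?thesis using irr by auto
  qed
  have key: "(a,b) \<in> ?D\<^sup>+ \<Longrightarrow> a \<noteq> v \<and> ((a,b) \<in> D'\<^sup>+ \<or> b = v)" for a b
  proof (induction rule: trancl_induct)
    case (base y)
    have "a \<noteq> v" using inD[OF base] .
    moreover have "(a,y) \<in> D'\<^sup>+ \<or> y = v" using base by auto
    ultimately show ?case by blast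
  next
    case (step y z)
    have "y \<noteq> v" using inD[OF step(2)] .
    then have "(a,y) \<in> D'\<^sup>+" using step(3) by blast
    moreover have "(y,z) \<in> D' \<or> z = v" using step(2) by auto
    ultimately show ?case using step(3) by (auto intro: trancl_into_trancl)
  qed
  have "acyclic ?D"
    unfolding acyclic_def using key acD' by (auto simp: acyclic_def)
  moreover have "?D \<subseteq> W \<times> W" using D'W HW by (auto simp: adj_def)
  ultimately have dag: "is_dag W ?D" using fin by (simp add: is_dag_def)
  have sk': "\<And>a b. adj D' a b \<longleftrightarrow> adj (restr H (W - {v})) a b"
    using E by (simp add: consistent_extension_def)
  have vD': "\<And>b. (v,b) \<notin> D'" "\<And>b. (b,v) \<notin> D'" using D'W by auto
  have HW': "\<And>a b. adj H a b \<Longrightarrow> a \<in> W \<and> b \<in> W" using HW by (auto simp: adj_def)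
  have sk: "adj ?D a b \<longleftrightarrow> adj H a b" for a b
  proof (cases "a = v \<or> b = v")
    case True
    then show ?thesis using vD' irr by (auto simp: adj_def)
  next
    case False
    have "adj ?D a b \<longleftrightarrow> adj D' a b" using False by (auto simp: adj_def)
    also have "\<dots> \<longleftrightarrow> adj H a b" using sk' False HW' by auto
    finally show ?thesis .
  qed
  have dr: "dir H a b \<longrightarrow> (a,b) \<in> ?D" for a b
  proof
    assume d: "dir H a b"
    show "(a,b) \<in> ?D"
    proof (cases "b = v")
      case True then show ?thesis using dir_adj[OF d] by auto
    next
      case False
      have "a \<noteq> v" using vs d by (auto simp: vsink_def)
      then have "dir (restr H (W - {v})) a b" using d False dir_adj[OF d] HW' by auto
      then show ?thesis using E by (auto simp: consistent_extension_def)
    qed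
  qed
  have vst: "vstruct ?D a c b \<longrightarrow> vstruct H a c b" for a c b
  proof
    assume a: "vstruct ?D a c b"
    then have d1: "dir ?D a c" and d2: "dir ?D b c" and ne: "a \<noteq> b" and na: "\<not> adj ?D a b"
      by (auto simp: vstruct_def)
    have naH: "\<not> adj H a b" using na sk by simp
    show "vstruct H a c b"
    proof (cases "c = v")
      case True
      have "adj H a v" using d1 True vD' by (auto simp: dir_def)
      moreover have "\<not> und H v a"
        using vs naH d2 True vD' ne by (auto simp: vsink_def dir_def adj_sym)
      moreover have "\<not> dir H v a" using vs by (auto simp: vsink_def)
      ultimately have "dir H a v" using adj_cases und_sym by metis
      moreover have "adj H b v" using d2 True vD' by (auto simp: dir_def)
      moreover have "\<not> und H v b"
        using vs naH d1 True vD' ne by (auto simp: vsink_def dir_def adj_sym)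
      moreover have "\<not> dir H v b" using vs by (auto simp: vsink_def)
      ultimately have "dir H b v" using adj_cases und_sym by metis
      then show ?thesis using \<open>dir H a v\<close> True ne naH by (simp add: vstruct_def)
    next
      case False
      have "dir D' a c" "dir D' b c" using d1 d2 False by (auto simp: dir_def)
      moreover have "\<not> adj D' a b" using na by (auto simp: adj_def)
      ultimately have "vstruct D' a c b" using ne by (simp add: vstruct_def)
      then have "vstruct (restr H (W - {v})) a c b" using E by (simp add: consistent_extension_def)
      then show ?thesis by (auto simp: vstruct_def)
    qed
  qed
  show ?thesis using dag sk dr vst by (simp add: consistent_extension_def)
qed



lemma KEY:
  assumes "card W = n" "good W H" "vsink W H s" "und H s z" "\<forall>m. adj H m s \<longrightarrow> \<not> dir H z m"
  shows "\<exists>v. vsink W H v \<and> (v = z \<or> v \<noteq> s \<and> \<not> adj H v s)"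
  using assms
proof (induction n arbitrary: W H s z rule: less_induct)
  case (less n W H s z)
  note IH = less.IH
  have gd: "good W H" and vs: "vsink W H s" and sz: "und H s z"
    and nz: "\<forall>m. adj H m s \<longrightarrow> \<not> dir H z m" and cW: "card W = n" using less.prems by auto
  show ?case
  proof (rule ccontr)
    assume nv: "\<not> ?case"
    have nv': "v \<noteq> z \<and> (v = s \<or> adj H v s)" if "vsink W H v" for v using nv that by blast
    have fin: "finite W" and HW: "H \<subseteq> W \<times> W" and cl: "closed H" using gd by (auto simp: good_def)
    have irr: "\<And>a. \<not> adj H a a" using gd by (rule good_irr)
    have HW': "adj H a b \<Longrightarrow> a \<in> W \<and> b \<in> W" for a b using HW by (auto simp: adj_def)
    have sW: "s \<in> W" using vs by (simp add: vsink_def)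
    have snd: "\<And>w. \<not> dir H s w" using vs by (simp add: vsink_def)
    have f1: "\<And>z' w. und H s z' \<Longrightarrow> adj H s w \<Longrightarrow> w \<noteq> z' \<Longrightarrow> adj H z' w"
      using vs by (simp add: vsink_def)
    have adjs: "\<And>m. adj H m s \<Longrightarrow> und H s m \<or> dir H m s"
      using snd adj_cases und_sym by metis
    have zs: "z \<noteq> s" using sz irr und_adj by metis
    have zW: "z \<in> W" using HW' und_adj[OF sz] by blast
    define W' where "W' = W - {s}"
    define H' where "H' = restr H W'"
    have cW': "card W' < n" using card_Diff1_less[OF fin sW] cW by (simp add: W'_def)
    have gd': "good W' H'" unfolding H'_def W'_def by (rule good_restr[OF gd]) auto
    have zW': "z \<in> W'" using zW zs by (simp add: W'_def)
    obtain t0 where t0: "vsink W' H' t0" using ext_vsink[OF gd'] zW' by blast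
    have vW': "vsink W' H' v \<Longrightarrow> v \<in> W \<and> v \<noteq> s" for v by (auto simp: vsink_def W'_def)
    have lift1: "adj H v s" if v: "vsink W' H' v" for v
    proof (rule ccontr)
      assume na: "\<not> adj H v s"
      have "vsink W H v"
        by (rule vsink_lift[OF v[unfolded H'_def]]) (use na HW' in \<open>auto simp: W'_def\<close>)
      then show False using nv' vW'[OF v] na by blast
    qed
    have nodir': "\<not> dir H v w" if "vsink W' H' v" "w \<noteq> s" for v w
    proof
      assume d: "dir H v w"
      have vW0: "v \<in> W'" using that(1) by (simp add: vsink_def)
      have "w \<in> W" using HW'[OF dir_adj[OF d]] by blast
      then have "w \<in> W'" using that(2) by (simp add: W'_def)
      then have "dir H' v w" using d vW0 by (simp add: H'_def)
      then show False using that by (simp add: vsink_def)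
    qed
    have H'adj: "a \<in> W' \<Longrightarrow> b \<in> W' \<Longrightarrow> adj H' a b \<longleftrightarrow> adj H a b" for a b by (simp add: H'_def)
    have H'und: "a \<in> W' \<Longrightarrow> b \<in> W' \<Longrightarrow> und H' a b \<longleftrightarrow> und H a b" for a b by (simp add: H'_def)
    have H'dir: "a \<in> W' \<Longrightarrow> b \<in> W' \<Longrightarrow> dir H' a b \<longleftrightarrow> dir H a b" for a b by (simp add: H'_def)
    have inW': "a \<in> W \<Longrightarrow> a \<noteq> s \<Longrightarrow> a \<in> W'" for a by (simp add: W'_def)
    show False
    proof (cases "\<exists>t. vsink W' H' t \<and> und H s t")
      case True
      then obtain t where t: "vsink W' H' t" "und H s t" by blast
      have tW': "t \<in> W'" using t by (simp add: vsink_def)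
      have ts: "t \<noteq> s" using vW'[OF t(1)] by simp
      show False
      proof (cases "\<exists>b. adj H t b \<and> b \<noteq> s \<and> \<not> adj H b s")
        case False
        have tnb: "adj H t w \<Longrightarrow> w \<noteq> s \<Longrightarrow> adj H w s" for w using False by blast
        have tv: "vsink W H t"
          unfolding vsink_def
        proof (intro conjI allI impI)
          show "t \<in> W" using vW'[OF t(1)] by simp
          fix w show "\<not> dir H t w"
          proof (cases "w = s")
            case True then show ?thesis using t(2) und_sym und_not_dir by metis
          next
            case False then show ?thesis using nodir'[OF t(1)] by blast
          qed
        next
          fix u w assume a: "und H t u" "adj H t w" "w \<noteq> u"
          show "adj H u w"
          proof (cases "u = s")
            case True
            then show ?thesis using tnb[OF a(2)] a(3) adj_sym by metis
          next
            case us: False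
            show ?thesis
            proof (cases "w = s")
              case True
              then show ?thesis using tnb[OF und_adj[OF a(1)] us] by simp
            next
              case ws: False
              have uW: "u \<in> W'" "w \<in> W'" using HW'[OF und_adj[OF a(1)]] HW'[OF a(2)] us ws inW' by auto
              have "und H' t u" "adj H' t w" using a uW tW' by (auto simp: H'_def)
              then have "adj H' u w" using t(1) a(3) by (auto simp: vsink_def)
              then show ?thesis using uW by (simp add: H'_def)
            qed
          qed
        qed
        then have tz: "t \<noteq> z" using nv' by blast
        define R where "R = W - {t}"
        define HR where "HR = restr H R"
        have tW: "t \<in> W" using tv by (simp add: vsink_def)
        have cR: "card R < n" using card_Diff1_less[OF fin tW] cW by (simp add: R_def)
        have gdR: "good R HR" unfolding HR_def R_def by (rule good_restr[OF gd]) auto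
        have sR: "s \<in> R" "z \<in> R" using sW zW ts tz by (auto simp: R_def)
        have vsR: "vsink R HR s" unfolding HR_def by (rule vsink_restr[OF vs sR(1)])
        have szR: "und HR s z" using sz sR by (simp add: HR_def)
        have nzR: "\<forall>m. adj HR m s \<longrightarrow> \<not> dir HR z m" using nz by (simp add: HR_def)
        obtain v where v: "vsink R HR v" "v = z \<or> v \<noteq> s \<and> \<not> adj HR v s"
          using IH[OF cR HOL.refl gdR vsR szR nzR] by blast
        have vR: "v \<in> R" using v(1) by (simp add: vsink_def)
        have tuniv: "adj H t w" if "w = s \<or> adj H s w" "w \<noteq> t" for w
          using that f1[OF t(2)] t(2) und_adj und_sym by metis
        have tnbr: "adj H t w \<Longrightarrow> w = s \<or> adj H s w" for w
          using tnb adj_sym by metis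
        show False
        proof (cases "v = z")
          case False
          then have vs': "v \<noteq> s" "\<not> adj H v s" using v(2) vR sR by (auto simp: HR_def)
          have "\<not> adj H v t" using tnbr vs' adj_sym by metis
          then have "\<forall>w. adj H v w \<longrightarrow> w \<in> R" using HW' by (auto simp: R_def)
          then have "vsink W H v" using vsink_lift[OF v(1)[unfolded HR_def]] by (auto simp: R_def)
          then show False using nv' vs' by blast
        next
          case True
          have zv: "vsink R HR z" using v(1) True by simp
          have zn: "adj H s w" if "adj H z w" "w \<noteq> t" "w \<noteq> s" for w
          proof -
            have "w \<in> R" using HW'[OF that(1)] that(2) by (simp add: R_def)
            then have "und HR z s" "adj HR z w" using und_symI[OF sz] sR that(1) by (auto simp: HR_def)
            then have "adj HR s w" using zv that(3) by (auto simp: vsink_def)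
            then show ?thesis by (simp add: HR_def)
          qed
          have "vsink W H z"
            unfolding vsink_def
          proof (intro conjI allI impI)
            show "z \<in> W" by (rule zW)
            fix w show "\<not> dir H z w"
            proof (cases "w = t")
              case True then show ?thesis using nz und_adj t(2) adj_sym by metis
            next
              case False
              show ?thesis
              proof
                assume d: "dir H z w"
                then have "dir HR z w" using False HW'[OF dir_adj[OF d]] sR by (auto simp: HR_def R_def)
                then show False using zv by (simp add: vsink_def)
              qed
            qed
          next
            fix u w assume a: "und H z u" "adj H z w" "w \<noteq> u"
            show "adj H u w"
            proof (cases "u = t")
              case True
              show ?thesis
              proof (cases "w = s")
                case True then show ?thesis using \<open>u = t\<close> t(2) und_adj und_sym by metis
              next
                case False then show ?thesis using \<open>u = t\<close> zn[OF a(2)] a(3) tuniv by metis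
              qed
            next
              case ut: False
              show ?thesis
              proof (cases "w = t")
                case True
                show ?thesis
                proof (cases "u = s")
                  case True then show ?thesis using \<open>w = t\<close> t(2) und_adj by metis
                next
                  case False
                  then have "adj H s u" using zn[OF und_adj[OF a(1)] ut] by simp
                  then show ?thesis using \<open>w = t\<close> tuniv ut adj_sym by metis
                qed
              next
                case wt: False
                have uW: "u \<in> R" "w \<in> R" using HW'[OF und_adj[OF a(1)]] HW'[OF a(2)] ut wt
                  by (auto simp: R_def)
                have "und HR z u" "adj HR z w" using a uW sR by (auto simp: HR_def)
                then have "adj HR u w" using zv a(3) by (auto simp: vsink_def)
                then show ?thesis by (simp add: HR_def)
              qed
            qed
          qed
          then show False using nv' by blast
        qed
      next
        case True
        define S where "S = {b. adj H t b \<and> b \<noteq> s \<and> \<not> adj H b s}"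
        have Sund: "und H t b" if "b \<in> S" for b
        proof -
          have b: "adj H t b" "b \<noteq> s" "\<not> adj H b s" using that by (auto simp: S_def)
          have "\<not> dir H t b" using nodir'[OF t(1) b(2)] .
          moreover have "\<not> dir H b t"
          proof
            assume "dir H b t"
            then have "adj H b s" using R1[OF cl _ _ b(2), of t] t(2) und_sym by metis
            then show False using b(3) by simp
          qed
          ultimately show ?thesis using adj_cases[OF b(1)] by blast
        qed
        have "S \<subseteq> W" by (auto simp: S_def dest!: HW')
        then have finS: "finite S" using fin by (rule finite_subset)
        have neS: "S \<noteq> {}" using True by (auto simp: S_def)
        obtain u where u: "u \<in> S" "\<forall>w\<in>S. \<not> dir H u w" using dir_sink_exists[OF gd finS neS] by blast
        have uS: "adj H t u" "u \<noteq> s" "\<not> adj H u s" using u(1) by (auto simp: S_def)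
        have tu: "und H t u" using Sund[OF u(1)] .
        have uW': "u \<in> W'" using HW'[OF uS(1)] uS(2) inW' by blast
        have hyp: "\<forall>m. adj H' m t \<longrightarrow> \<not> dir H' u m"
        proof (intro allI impI notI)
          fix m assume a: "adj H' m t" "dir H' u m"
          have mW': "m \<in> W'" using a(1) by (simp add: H'_def)
          have ms: "m \<noteq> s" using mW' by (simp add: W'_def)
          have mt: "adj H m t" and um: "dir H u m" using a by (auto simp: H'_def)
          show False
          proof (cases "adj H m s")
            case False
            have "adj H t m" using mt by (auto simp: adj_def)
            then have "m \<in> S" using ms False by (auto simp: S_def)
            then show False using u(2) um by blast
          next
            case True
            from adjs[OF True] show False
            proof
              assume "und H s m"
              then have "adj H u s" using R1[OF cl _ um uS(2)] und_sym by metis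
              then show False using uS(3) by simp
            next
              assume ms': "dir H m s"
              have "adj H t m" using mt adj_sym by metis
              from adj_cases[OF this] show False
              proof (elim disjE)
                assume "und H t m"
                then have "adj H u s" using R4[OF cl _ tu _ um ms' uS(2)] t(2) und_sym by metis
                then show False using uS(3) by simp
              next
                assume "dir H t m" then show False using nodir'[OF t(1) ms] by simp
              next
                assume "dir H m t"
                then show False using R2[OF cl _ um] tu und_sym by metis
              qed
            qed
          qed
        qed
        have tu': "und H' t u" using tu tW' uW' by (simp add: H'_def)
        obtain v where v: "vsink W' H' v" "v = u \<or> v \<noteq> t \<and> \<not> adj H' v t"
          using IH[OF cW' HOL.refl gd' t(1) tu' hyp] by blast
        show False
        proof (cases "v = u")
          case True then show False using lift1[OF v(1)] uS(3) by simp
        next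
          case False
          then have vt: "v \<noteq> t" "\<not> adj H' v t" using v(2) by auto
          have vW'': "v \<in> W'" using v(1) by (simp add: vsink_def)
          have "adj H v s" using lift1[OF v(1)] .
          then have "adj H t v" using f1[OF t(2)] vt(1) adj_sym by metis
          then have "adj H' v t" using vW'' tW' adj_sym by (metis H'adj)
          then show False using vt(2) by simp
        qed
      qed
    next
      case False
      have C0: "dir H t s" if "vsink W' H' t" for t
        using adjs[OF lift1[OF that]] False that by blast
      have C1: "und H t z'" if t: "vsink W' H' t" and sz': "und H s z'" for t z'
      proof -
        have ts: "dir H t s" using C0[OF t] .
        have tz': "t \<noteq> z'" using ts sz' und_not_dir' by metis
        have z's: "z' \<noteq> s" using sz' irr und_adj by metis
        have "adj H z' t" using f1[OF sz' dir_adj'[OF ts] tz'] .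
        then have "adj H t z'" using adj_sym by metis
        moreover have "\<not> dir H t z'" using nodir'[OF t z's] .
        moreover have "\<not> dir H z' t" using R2[OF cl _ _ ] ts sz' und_sym by metis
        ultimately show ?thesis using adj_cases[of H t z'] by blast
      qed
      have t0s: "dir H t0 s" using C0[OF t0] .
      have t0z: "und H t0 z" using C1[OF t0 sz] .
      have t0W': "t0 \<in> W'" using t0 by (simp add: vsink_def)
      define Y where "Y = {y. und H t0 y \<and> y \<noteq> s \<and> \<not> dir H y s}"
      have "Y \<subseteq> W" by (auto simp: Y_def dest!: und_adj HW')
      then have finY: "finite Y" using fin by (rule finite_subset)
      have zY: "z \<in> Y" using t0z zs und_not_dir'[OF sz] by (auto simp: Y_def)
      then have neY: "Y \<noteq> {}" by auto
      obtain y where y: "y \<in> Y" "\<forall>w\<in>Y. \<not> dir H y w" using dir_sink_exists[OF gd finY neY] by blast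
      have yY: "und H t0 y" "y \<noteq> s" "\<not> dir H y s" using y(1) by (auto simp: Y_def)
      have yW': "y \<in> W'" using HW'[OF und_adj[OF yY(1)]] yY(2) inW' by blast
      have hyp: "\<forall>m. adj H' m t0 \<longrightarrow> \<not> dir H' y m"
      proof (intro allI impI notI)
        fix m assume a: "adj H' m t0" "dir H' y m"
        have mW': "m \<in> W'" using a(1) by (simp add: H'_def)
        have ms: "m \<noteq> s" using mW' by (simp add: W'_def)
        have mt: "adj H t0 m" and ym: "dir H y m" using a adj_symI by (auto simp: H'_def)
        from adj_cases[OF mt] show False
        proof (elim disjE)
          assume "dir H t0 m" then show False using nodir'[OF t0 ms] by simp
        next
          assume "dir H m t0"
          then show False using R2[OF cl _ ym] yY(1) und_sym by metis
        next
          assume tm: "und H t0 m"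
          have mps: "dir H m s"
          proof (rule ccontr)
            assume "\<not> dir H m s"
            then have "m \<in> Y" using tm ms by (simp add: Y_def)
            then show False using y(2) ym by blast
          qed
          show False
          proof (cases "adj H y s")
            case True
            then have "und H s y" using adjs yY(3) by blast
            then show False using R2[OF cl _ ym] mps und_sym by metis
          next
            case ny: False
            have zy: "z \<noteq> y" using ny sz und_adj und_sym by metis
            have "und H' t0 y" "adj H' t0 z" using yY(1) t0z t0W' yW' zW' und_adj
              by (auto simp: H'_def)
            then have "adj H' y z" using t0 zy by (auto simp: vsink_def)
            then have yz: "adj H y z" by (simp add: H'_def)
            have nyz: "\<not> dir H y z"
            proof
              assume "dir H y z"
              then have "adj H y s" using R1[OF cl _ _ yY(2), of z] sz und_sym by metis
              then show False using ny by simp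
            qed
            have mz: "m \<noteq> z" using mps sz und_not_dir' by metis
            have zm: "adj H z m" using f1[OF sz dir_adj'[OF mps] mz] .
            have nzm: "\<not> dir H z m" using R2[OF cl _ _] mps sz und_sym by metis
            have c1: "und H z y \<or> dir H z y" using adj_cases[OF yz] nyz und_sym by metis
            have c2: "und H z m \<or> dir H m z" using adj_cases[OF zm] nzm by metis
            from c1 c2 show False
            proof (elim disjE)
              assume "und H z y" "und H z m"
              then have "adj H y s" using R4[OF cl _ _ _ ym mps yY(2)] sz und_sym by metis
              then show False using ny by simp
            next
              assume "und H z y" "dir H m z"
              then show False using R2[OF cl _ ym] und_sym by metis
            next
              assume "dir H z y" "und H z m"
              then show False using R2[OF cl _ _] ym by metis
            next
              assume "dir H z y" "dir H m z"
              then show False using no_3cycle[OF gd _ ym] by metis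
            qed
          qed
        qed
      qed
      have t0y: "und H' t0 y" using yY(1) t0W' yW' by (simp add: H'_def)
      obtain v where v: "vsink W' H' v" "v = y \<or> v \<noteq> t0 \<and> \<not> adj H' v t0"
        using IH[OF cW' HOL.refl gd' t0 t0y hyp] by blast
      have vs': "dir H v s" using C0[OF v(1)] .
      show False
      proof (cases "v = y")
        case True then show False using vs' yY(3) by simp
      next
        case False
        then have vt: "v \<noteq> t0" "\<not> adj H' v t0" using v(2) by auto
        have vW'': "v \<in> W'" using v(1) by (simp add: vsink_def)
        have nvt: "\<not> adj H t0 v" using vt(2) vW'' t0W' adj_sym by (metis H'adj)
        have vz: "und H v z" using C1[OF v(1) sz] .
        have "adj H t0 v" using R3[OF cl _ _ _ t0s vs' vt(1)[symmetric]] t0z vz sz und_sym by metis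
        then show False using nvt by simp
      qed
    qed
  qed
qed



lemma Sprime:
  assumes gd: "good W H" and vs: "vsink W H s" and sz0: "und H s z0"
  shows "\<exists>v. vsink W H v \<and> v \<noteq> s"
proof -
  have fin: "finite W" and HW: "H \<subseteq> W \<times> W" and cl: "closed H" using gd by (auto simp: good_def)
  have irr: "\<And>a. \<not> adj H a a" using gd by (rule good_irr)
  have HW': "adj H a b \<Longrightarrow> a \<in> W \<and> b \<in> W" for a b using HW by (auto simp: adj_def)
  define S where "S = {z. und H s z}"
  have "S \<subseteq> W" by (auto simp: S_def dest!: und_adj HW')
  then have finS: "finite S" using fin by (rule finite_subset)
  have neS: "S \<noteq> {}" using sz0 by (auto simp: S_def)
  obtain z where z: "z \<in> S" "\<forall>w\<in>S. \<not> dir H z w" using dir_sink_exists[OF gd finS neS] by blast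
  have sz: "und H s z" using z(1) by (simp add: S_def)
  have nz: "\<forall>m. adj H m s \<longrightarrow> \<not> dir H z m"
  proof (intro allI impI notI)
    fix m assume a: "adj H m s" "dir H z m"
    from adj_cases[OF a(1)] show False
    proof (elim disjE)
      assume "und H m s"
      then have "m \<in> S" using und_symI by (auto simp: S_def)
      then show False using z(2) a(2) by blast
    next
      assume "dir H m s"
      then show False using R2[OF cl und_symI[OF sz] a(2)] by simp
    next
      assume "dir H s m"
      then show False using vs by (simp add: vsink_def)
    qed
  qed
  obtain v where v: "vsink W H v" "v = z \<or> v \<noteq> s \<and> \<not> adj H v s"
    using KEY[OF HOL.refl gd vs sz nz] by blast
  have "z \<noteq> s" using sz irr und_adj by metis
  then show ?thesis using v by blast
qed

lemma THM:
  assumes "card W = n" "good W H" "x \<in> W \<longrightarrow> y \<in> W \<longrightarrow> dir H x y"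
  shows "\<exists>D. consistent_extension W H D \<and> (\<forall>z. und H x z \<longrightarrow> (x,z) \<in> D) \<and>
           (\<forall>z. und H y z \<longrightarrow> (y,z) \<in> D)"
  using assms
proof (induction n arbitrary: W H rule: less_induct)
  case (less n W H)
  note IH = less.IH
  have cW: "card W = n" and gd: "good W H" and xy: "x \<in> W \<longrightarrow> y \<in> W \<longrightarrow> dir H x y"
    using less.prems by auto
  have fin: "finite W" and HW: "H \<subseteq> W \<times> W" using gd by (auto simp: good_def)
  have irr: "\<And>a. \<not> adj H a a" using gd by (rule good_irr)
  have HW': "adj H a b \<Longrightarrow> a \<in> W \<and> b \<in> W" for a b using HW by (auto simp: adj_def)
  show ?case
  proof (cases "W = {}")
    case True
    then have H0: "H = {}" using HW by auto
    have "consistent_extension W H {}"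
      using True H0 by (simp add: consistent_extension_def is_dag_def adj_def dir_def vstruct_def acyclic_def)
    moreover have "\<And>a b. \<not> und H a b" using H0 by (simp add: und_def)
    ultimately show ?thesis by blast
  next
    case False
    obtain s where s: "vsink W H s" using ext_vsink[OF gd False] by blast
    have "\<exists>v. vsink W H v \<and> (v \<notin> {x,y} \<or> (\<forall>u. \<not> und H v u))"
    proof (cases "s \<notin> {x,y} \<or> (\<forall>u. \<not> und H s u)")
      case True then show ?thesis using s by blast
    next
      case False
      then obtain u where su: "und H s u" and sxy: "s \<in> {x,y}" by blast
      obtain v where v: "vsink W H v" "v \<noteq> s" using Sprime[OF gd s su] by blast
      show ?thesis
      proof (cases "v \<in> {x,y}")
        case False then show ?thesis using v by blast
      next
        case True
        have "x \<in> W" "y \<in> W" using sxy True s v by (auto simp: vsink_def)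
        then have "dir H x y" using xy by blast
        moreover have "x = s \<or> x = v" using sxy True v(2) by auto
        ultimately show ?thesis using s v(1) by (auto simp: vsink_def)
      qed
    qed
    then obtain v where v: "vsink W H v" "v \<notin> {x,y} \<or> (\<forall>u. \<not> und H v u)" by blast
    have vW: "v \<in> W" using v(1) by (simp add: vsink_def)
    define W' where "W' = W - {v}"
    define H' where "H' = restr H W'"
    have cW': "card W' < n" using card_Diff1_less[OF fin vW] cW by (simp add: W'_def)
    have gd': "good W' H'" unfolding H'_def W'_def by (rule good_restr[OF gd]) auto
    have xy': "x \<in> W' \<longrightarrow> y \<in> W' \<longrightarrow> dir H' x y" using xy by (auto simp: H'_def W'_def)
    obtain D' where D': "consistent_extension W' H' D'" "\<forall>z. und H' x z \<longrightarrow> (x,z) \<in> D'"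
      "\<forall>z. und H' y z \<longrightarrow> (y,z) \<in> D'"
      using IH[OF cW' HOL.refl gd' xy'] by blast
    let ?D = "D' \<union> {(u,v) | u. adj H u v}"
    have ext: "consistent_extension W H ?D"
      by (rule DT[OF fin HW irr v(1)]) (use D'(1) in \<open>simp add: W'_def H'_def\<close>)
    have propxy: "(a,z) \<in> ?D" if a: "a \<in> {x,y}" "und H a z" "\<forall>z. und H' a z \<longrightarrow> (a,z) \<in> D'" for a z
    proof (cases "z = v")
      case True then show ?thesis using und_adj[OF a(2)] by auto
    next
      case False
      have "a \<noteq> v" using v(2) a(1,2) by blast
      then have "und H' a z" using False HW'[OF und_adj[OF a(2)]] a(2) by (simp add: H'_def W'_def)
      then show ?thesis using a(3) by blast
    qed
    show ?thesis using ext propxy[of x] propxy[of y] D'(2,3) by blast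
  qed
qed

lemma acyc2: "acyclic D \<Longrightarrow> (a,b) \<in> D \<Longrightarrow> (b,a) \<notin> D"
  unfolding acyclic_def by (meson r_into_trancl trancl_into_trancl)
lemma acyc3: "acyclic D \<Longrightarrow> (a,b) \<in> D \<Longrightarrow> (b,c) \<in> D \<Longrightarrow> (c,a) \<notin> D"
  unfolding acyclic_def by (meson r_into_trancl trancl_into_trancl)
lemma acyc4: "acyclic D \<Longrightarrow> (a,b) \<in> D \<Longrightarrow> (b,c) \<in> D \<Longrightarrow> (c,d) \<in> D \<Longrightarrow> (d,a) \<notin> D"
  unfolding acyclic_def by (meson r_into_trancl trancl_into_trancl)

lemma sound:
  assumes dag: "is_dag V D" and pat: "pattern D = P" and KD: "K \<subseteq> D"
    and Kund: "\<forall>(a,b)\<in>K. und P a b"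
    and reach: "meek_reach E F" and E0: "E = orient_all P K"
  shows "F \<subseteq> P \<and> (\<forall>a b. adj F a b \<longleftrightarrow> adj P a b) \<and> (\<forall>a b. dir P a b \<longrightarrow> dir F a b)
     \<and> (\<forall>a b. dir F a b \<longrightarrow> (a,b) \<in> D)"
  using reach E0
proof (induction rule: meek_reach.induct)
  case (refl E)
  then have E0: "E = orient_all P K" by simp
  have ac: "acyclic D" using dag by (simp add: is_dag_def)
  have DP: "D \<subseteq> P" using pat by (auto simp: pattern_def)
  let ?F = "orient_all P K"
  have "?F \<subseteq> P" by (auto simp: orient_all_def)
  moreover have "adj ?F a b \<longleftrightarrow> adj P a b" for a b
  proof
    assume "adj ?F a b" then show "adj P a b" by (auto simp: orient_all_def adj_def)
  next
    assume ab: "adj P a b"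
    show "adj ?F a b"
    proof (cases "(a,b) \<in> P")
      case True
      show ?thesis
      proof (cases "(b,a) \<in> K")
        case False then show ?thesis using True by (auto simp: orient_all_def adj_def)
      next
        case bK: True
        then have "(b,a) \<in> P" using Kund by (auto simp: und_def)
        moreover have "(a,b) \<notin> K" using bK KD acyc2[OF ac] by blast
        ultimately show ?thesis by (auto simp: orient_all_def adj_def)
      qed
    next
      case False
      then have ba: "(b,a) \<in> P" using ab by (auto simp: adj_def)
      show ?thesis
      proof (cases "(a,b) \<in> K")
        case False then show ?thesis using ba by (auto simp: orient_all_def adj_def)
      next
        case aK: True
        then have "(a,b) \<in> P" using Kund by (auto simp: und_def)
        then show ?thesis using \<open>(a,b) \<notin> P\<close> by simp
      qed
    qed
  qed
  moreover have "dir P a b \<longrightarrow> dir ?F a b" for a b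
    using Kund by (auto simp: orient_all_def dir_def und_def)
  moreover have "dir ?F a b \<longrightarrow> (a,b) \<in> D" for a b
  proof
    assume d: "dir ?F a b"
    then have abP: "(a,b) \<in> P" by (auto simp: orient_all_def dir_def)
    show "(a,b) \<in> D"
    proof (cases "(b,a) \<in> P")
      case True
      then have "(a,b) \<in> K" using d by (auto simp: orient_all_def dir_def)
      then show ?thesis using KD by blast
    next
      case False
      then have "(b,a) \<notin> D" using DP by blast
      then show ?thesis using abP pat by (auto simp: pattern_def)
    qed
  qed
  ultimately show ?case unfolding E0 by blast
next
  case (step E F i j)
  have ac: "acyclic D" using dag by (simp add: is_dag_def)
  have DP: "D \<subseteq> P" using pat by (auto simp: pattern_def)
  have adjDP: "adj D a b \<longleftrightarrow> adj P a b" for a b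
    using pat by (auto simp: pattern_def adj_def)
  have FP: "F \<subseteq> P" and adjF: "\<And>a b. adj F a b \<longleftrightarrow> adj P a b"
    and dPF: "\<And>a b. dir P a b \<Longrightarrow> dir F a b" and dFD: "\<And>a b. dir F a b \<Longrightarrow> (a,b) \<in> D"
    using step.IH step.prems by auto
  have adjFD: "adj F a b \<longleftrightarrow> adj D a b" for a b using adjF adjDP by simp
  have vsP: "dir F a c" if "(a,c) \<in> D" "(b,c) \<in> D" "a \<noteq> b" "\<not> adj D a b" for a b c
  proof -
    have "(c,a) \<notin> D" "(c,b) \<notin> D" using acyc2[OF ac] that by auto
    then have "vstruct D a c b" using that by (simp add: vstruct_def dir_def)
    then have "in_vstruct D a c" by (auto simp: in_vstruct_def)
    moreover have "(a,c) \<in> P" using that DP by blast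
    ultimately have "dir P a c" using \<open>(c,a) \<notin> D\<close> pat by (auto simp: pattern_def dir_def)
    then show ?thesis by (rule dPF)
  qed
  have app: "meek_applies F i j" by fact
  have uij: "und F i j" using app by (simp add: meek_applies_def)
  have ij: "i \<noteq> j"
  proof
    assume "i = j"
    have "adj F i j" by (rule und_adj[OF uij])
    then have "adj D i i" using \<open>i = j\<close> adjFD by simp
    then show False using acyc2[OF ac, of i i] by (auto simp: adj_def)
  qed
  let ?F = "orient F i j"
  have "?F \<subseteq> P" using FP by (auto simp: orient_def)
  moreover have "adj ?F a b \<longleftrightarrow> adj P a b" for a b
    using adjF[of a b] uij ij by (auto simp: orient_def adj_def und_def)
  moreover have "dir P a b \<longrightarrow> dir ?F a b" for a b
    using dPF[of a b] uij ij by (auto simp: orient_def dir_def und_def)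
  moreover have "(i,j) \<in> D"
  proof (rule ccontr)
    assume nij: "(i,j) \<notin> D"
    have "adj F i j" by (rule und_adj[OF uij])
    then have "adj D i j" using adjFD by simp
    then have ji: "(j,i) \<in> D" using nij by (auto simp: adj_def)
    have undnot: "\<not> dir F a b" if "und F a b" for a b using that by (simp add: und_def dir_def)
    have undnot': "\<not> dir F b a" if "und F a b" for a b using that by (simp add: und_def dir_def)
    have adjD: "(a,b) \<in> D \<or> (b,a) \<in> D" if "und F a b" for a b
      using adjFD[of a b] und_adj[OF that] by (auto simp: adj_def)
    from app[unfolded meek_applies_def] show False
    proof (elim conjE disjE exE)
      fix k assume a: "dir F k i" "k \<noteq> j" "\<not> adj F k j"
      have "\<not> adj D k j" using a(3) adjFD by simp
      then have "\<not> adj D j k" by (auto simp: adj_def)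
      then have "dir F j i" using vsP[OF ji dFD[OF a(1)] a(2)[symmetric]] by simp
      then show False using undnot'[OF uij] by simp
    next
      fix k assume a: "dir F i k" "dir F k j"
      then show False using acyc3[OF ac dFD[OF a(1)] dFD[OF a(2)]] ji by simp
    next
      fix k l assume a: "und F i k" "und F i l" "dir F k j" "dir F l j" "k \<noteq> l" "\<not> adj F k l"
      have "(i,k) \<notin> D" using acyc3[OF ac _ dFD[OF a(3)]] ji by blast
      then have ki: "(k,i) \<in> D" using adjD[OF a(1)] by blast
      have "(i,l) \<notin> D" using acyc3[OF ac _ dFD[OF a(4)]] ji by blast
      then have li: "(l,i) \<in> D" using adjD[OF a(2)] by blast
      have "dir F k i" using vsP[OF ki li a(5)] a(6) adjFD by simp
      then show False using undnot'[OF a(1)] by simp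
    next
      fix k l assume a: "und F i k" "und F i l" "dir F k l" "dir F l j" "k \<noteq> j" "\<not> adj F k j"
      have "(i,l) \<notin> D" using acyc3[OF ac _ dFD[OF a(4)]] ji by blast
      then have li: "(l,i) \<in> D" using adjD[OF a(2)] by blast
      have "(i,k) \<notin> D" using acyc4[OF ac _ dFD[OF a(3)] dFD[OF a(4)]] ji by blast
      then have ki: "(k,i) \<in> D" using adjD[OF a(1)] by blast
      have "dir F k i" using vsP[OF ki ji a(5)] a(6) adjFD by simp
      then show False using undnot'[OF a(1)] by simp
    qed
  qed
  moreover have "dir ?F a b \<longrightarrow> (a,b) \<in> D" for a b
  proof
    assume d: "dir ?F a b"
    show "(a,b) \<in> D"
    proof (cases "(a,b) = (i,j)")
      case True then show ?thesis using \<open>(i,j) \<in> D\<close> by simp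
    next
      case False
      then have "dir F a b" using d uij by (auto simp: orient_def dir_def und_def)
      then show ?thesis by (rule dFD)
    qed
  qed
  ultimately show ?case by blast
qed

theorem mainTheorem17:
  fixes V :: "'a set" and D0 P K G :: "('a \<times> 'a) set" and x y :: 'a
  assumes "is_dag V D0" and "P = pattern D0"
    and "consistent_bk V P K"
    and "meek_closure P K G"
    and "dir G x y"
  shows "\<exists>D. consistent_extension V G D \<and>
           (\<forall>z. und G x z \<longrightarrow> (x,z) \<in> D) \<and>
           (\<forall>z. und G y z \<longrightarrow> (y,z) \<in> D)"
proof -
  obtain D where D: "is_dag V D" "pattern D = P" "K \<subseteq> D" and Kund: "\<forall>(a,b)\<in>K. und P a b"
    using assms(3) by (auto simp: consistent_bk_def)
  have reach: "meek_reach (orient_all P K) G" and cl: "closed G"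
    using assms(4) by (auto simp: meek_closure_def closed_def)
  have S: "G \<subseteq> P" "\<forall>a b. adj G a b \<longleftrightarrow> adj P a b" "\<forall>a b. dir P a b \<longrightarrow> dir G a b"
    "\<forall>a b. dir G a b \<longrightarrow> (a,b) \<in> D"
    using sound[OF D Kund reach HOL.refl] by auto
  have ac: "acyclic D" and DV: "D \<subseteq> V \<times> V" and fin: "finite V" using D(1) by (auto simp: is_dag_def)
  have PV: "P \<subseteq> V \<times> V" using D(2) DV by (auto simp: pattern_def)
  have adjDP: "adj D a b \<longleftrightarrow> adj P a b" for a b
    using D(2) by (auto simp: pattern_def adj_def)
  have DP: "D \<subseteq> P" using D(2) by (auto simp: pattern_def)
  have "consistent_extension V G D"
    unfolding consistent_extension_def
  proof (intro conjI allI impI)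
    show "is_dag V D" by (rule D(1))
    fix a b show "adj D a b \<longleftrightarrow> adj G a b" using adjDP S(2) by simp
  next
    fix a b assume "dir G a b" then show "(a,b) \<in> D" using S(4) by blast
  next
    fix a c b assume v: "vstruct D a c b"
    have dP: "dir P a c" if "vstruct D a c b" for a c b
    proof -
      have "(a,c) \<in> D" "(c,a) \<notin> D" using that by (auto simp: vstruct_def dir_def)
      moreover have "in_vstruct D a c" using that by (auto simp: in_vstruct_def)
      ultimately show ?thesis using D(2) DP by (auto simp: pattern_def dir_def)
    qed
    have v': "vstruct D b c a" using v by (auto simp: vstruct_def adj_def)
    have "dir G a c" "dir G b c" using S(3) dP[OF v] dP[OF v'] by auto
    moreover have "a \<noteq> b" "\<not> adj G a b" using v adjDP S(2) by (auto simp: vstruct_def)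
    ultimately show "vstruct G a c b" by (simp add: vstruct_def)
  qed
  then have gd: "good V G" using fin S(1) PV cl by (auto simp: good_def)
  show ?thesis using THM[OF HOL.refl gd] assms(5) by blast
qed

end
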